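(* For every set $S\subseteq V$, if $R_j$ is drawn from $\Omega^n$ and $X_j(S)=\min\{1,|S\cap R_j|\}$, then $$\mathbb{B}(S)=\Phi\cdot\mathbb{E}[X_j(S)]+\sum_{v\in S}(1-\gamma(v))\,b(v)=\Gamma\cdot\mathbb{E}[Z_j(S)],$$ where $Z_j(S)=\frac{\Phi}{\Gamma}X_j(S)+\sum_{v\in S}(1-\gamma(v))\frac{b(v)}{\Gamma}$.
   Context: Let $G=(V,E)$ be a directed graph with $n=|V|$ in which each edge $(u,v)$ has probability $p(u,v)\in(0,1)$ (Independent Cascade model). A random sample graph $g$ keeps each edge $e$ independently with probability $p(e)$. Let $R(g,S)$ be the set of nodes reachable from $S$ in $g$. Each node $u$ has benefit $b(u)\ge 0$. The benefit function is $\mathbb{B}(S)=\mathbb{E}_g\big[\sum_{u\in R(g,S)}b(u)\big]$. Let $\Gamma=\sum_{u\in V}b(u)>0$. For a node $u$ with in-neighbour set $N_{in}(u)$, let $\gamma(u)=1-\prod_{v\in N_{in}(u)}(1-p(v,u))$. Let $\Phi=\sum_{u}\gamma(u)b(u)>0$. IBS distribution $\Omega^n$: pick a source node $u$ with probability $\gamma(u)b(u)/\Phi$. Then output the set of nodes that can reach $u$ in a random sample graph $g$, conditioned on the event that at least one in-edge of $u$ is present in $g$. *)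

theory Defs
  imports Complex_Main
begin

type_synonym 'a edge = "'a \<times> 'a"

definition sample_prob :: "'a edge set \<Rightarrow> ('a edge \<Rightarrow> real) \<Rightarrow> 'a edge set \<Rightarrow> real" where
  "sample_prob E p g = (\<Prod>e\<in>g. p e) * (\<Prod>e\<in>E - g. 1 - p e)"

definition prob_event :: "'a edge set \<Rightarrow> ('a edge \<Rightarrow> real) \<Rightarrow> ('a edge set \<Rightarrow> bool) \<Rightarrow> real" where
  "prob_event E p A = (\<Sum>g\<in>{g. g \<subseteq> E \<and> A g}. sample_prob E p g)"

definition cond_prob :: "'a edge set \<Rightarrow> ('a edge \<Rightarrow> real) \<Rightarrow> ('a edge set \<Rightarrow> bool) \<Rightarrow> ('a edge set \<Rightarrow> bool) \<Rightarrow> real" where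
  "cond_prob E p A C = prob_event E p (\<lambda>g. A g \<and> C g) / prob_event E p C"

definition reachable_set :: "'a edge set \<Rightarrow> 'a set \<Rightarrow> 'a set" where
  "reachable_set g S = {v. \<exists>s\<in>S. (s, v) \<in> g\<^sup>*}"

definition reaching_set :: "'a edge set \<Rightarrow> 'a \<Rightarrow> 'a set" where
  "reaching_set g u = {v. (v, u) \<in> g\<^sup>*}"

definition in_nbrs :: "'a edge set \<Rightarrow> 'a \<Rightarrow> 'a set" where
  "in_nbrs E u = {v. (v, u) \<in> E}"

definition has_in_edge :: "'a edge set \<Rightarrow> 'a \<Rightarrow> bool" where
  "has_in_edge g u = (\<exists>v. (v, u) \<in> g)"

definition gamma :: "'a edge set \<Rightarrow> ('a edge \<Rightarrow> real) \<Rightarrow> 'a \<Rightarrow> real" where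
  "gamma E p u = 1 - (\<Prod>v\<in>in_nbrs E u. 1 - p (v, u))"

definition benefit :: "'a edge set \<Rightarrow> ('a edge \<Rightarrow> real) \<Rightarrow> ('a \<Rightarrow> real) \<Rightarrow> 'a set \<Rightarrow> real" where
  "benefit E p b S = (\<Sum>g\<in>Pow E. sample_prob E p g * (\<Sum>u\<in>reachable_set g S. b u))"

definition Gamma :: "'a set \<Rightarrow> ('a \<Rightarrow> real) \<Rightarrow> real" where
  "Gamma V b = (\<Sum>u\<in>V. b u)"

definition Phi :: "'a set \<Rightarrow> 'a edge set \<Rightarrow> ('a edge \<Rightarrow> real) \<Rightarrow> ('a \<Rightarrow> real) \<Rightarrow> real" where
  "Phi V E p b = (\<Sum>u\<in>V. gamma E p u * b u)"

text \<open>IBS distribution Omega^n: probability that the output set equals R.\<close>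
definition ibs_prob :: "'a set \<Rightarrow> 'a edge set \<Rightarrow> ('a edge \<Rightarrow> real) \<Rightarrow> ('a \<Rightarrow> real) \<Rightarrow> 'a set \<Rightarrow> real" where
  "ibs_prob V E p b R = (\<Sum>u\<in>V. (gamma E p u * b u / Phi V E p b) *
      cond_prob E p (\<lambda>g. reaching_set g u = R) (\<lambda>g. has_in_edge g u))"

text \<open>Expectation of f(R) for R drawn from Omega^n (all outputs are subsets of V).\<close>
definition ibs_expect :: "'a set \<Rightarrow> 'a edge set \<Rightarrow> ('a edge \<Rightarrow> real) \<Rightarrow> ('a \<Rightarrow> real) \<Rightarrow> ('a set \<Rightarrow> real) \<Rightarrow> real" where
  "ibs_expect V E p b f = (\<Sum>R\<in>Pow V. ibs_prob V E p b R * f R)"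

definition X_var :: "'a set \<Rightarrow> 'a set \<Rightarrow> real" where
  "X_var S R = real (min 1 (card (S \<inter> R)))"

definition Z_var :: "'a set \<Rightarrow> 'a edge set \<Rightarrow> ('a edge \<Rightarrow> real) \<Rightarrow> ('a \<Rightarrow> real) \<Rightarrow> 'a set \<Rightarrow> 'a set \<Rightarrow> real" where
  "Z_var V E p b S R = Phi V E p b / Gamma V b * X_var S R
     + (\<Sum>v\<in>S. (1 - gamma E p v) * b v / Gamma V b)"

end

theory Submission imports Defs begin

lemma L1: assumes "finite E" shows "(\<Sum>g\<in>Pow E. sample_prob E p g) = 1"
  using prod_add[OF assms, of p "\<lambda>e. 1 - p e"] by (simp add: sample_prob_def)

lemma pe_alt: assumes "finite E" shows "prob_event E p A = (\<Sum>g\<in>Pow E. sample_prob E p g * (if A g then 1 else 0))"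
proof -
  have "{g. g \<subseteq> E \<and> A g} = Pow E \<inter> {g. A g}" by auto
  hence "prob_event E p A = sum (sample_prob E p) (Pow E \<inter> {g. A g})" unfolding prob_event_def by simp
  also have "\<dots> = (\<Sum>g\<in>Pow E. if g \<in> {g. A g} then sample_prob E p g else 0)"
    by (rule sum.inter_restrict) (use assms in simp)
  also have "\<dots> = (\<Sum>g\<in>Pow E. sample_prob E p g * (if A g then 1 else 0))"
    by (rule sum.cong) auto
  finally show ?thesis .
qed

lemma pe_cong: assumes "\<And>g. g \<subseteq> E \<Longrightarrow> A g = B g" shows "prob_event E p A = prob_event E p B"
proof -
  have "{g. g \<subseteq> E \<and> A g} = {g. g \<subseteq> E \<and> B g}" using assms by blast
  thus ?thesis unfolding prob_event_def by (rule arg_cong)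
qed

lemma pe_false: assumes "\<And>g. g \<subseteq> E \<Longrightarrow> \<not> A g" shows "prob_event E p A = 0"
proof -
  have "{g. g \<subseteq> E \<and> A g} = {}" using assms by blast
  thus ?thesis unfolding prob_event_def by (metis sum.empty)
qed

lemma pe_true: assumes "finite E" "\<And>g. g \<subseteq> E \<Longrightarrow> A g" shows "prob_event E p A = 1"
proof -
  have "{g. g \<subseteq> E \<and> A g} = Pow E" using assms by blast
  thus ?thesis unfolding prob_event_def using L1[OF assms(1), of p] by simp
qed

lemma sp_nonneg: "(\<And>e. e \<in> E \<Longrightarrow> 0 < p e \<and> p e < 1) \<Longrightarrow> g \<subseteq> E \<Longrightarrow> sample_prob E p g \<ge> 0"
  unfolding sample_prob_def
  by (intro mult_nonneg_nonneg prod_nonneg) (auto, (metis less_eq_real_def subsetD)+)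

lemma pe_mono: assumes "finite E" "\<And>e. e \<in> E \<Longrightarrow> 0 < p e \<and> p e < 1" "\<And>g. g \<subseteq> E \<Longrightarrow> A g \<Longrightarrow> B g"
  shows "prob_event E p A \<le> prob_event E p B" "0 \<le> prob_event E p A"
proof -
  have f: "finite {g. g \<subseteq> E \<and> B g}" using assms(1) by simp
  show "prob_event E p A \<le> prob_event E p B"
    unfolding prob_event_def
    by (rule sum_mono2[OF f]) (use assms sp_nonneg[OF assms(2)] in auto)
  show "0 \<le> prob_event E p A"
    unfolding prob_event_def by (rule sum_nonneg) (use sp_nonneg[OF assms(2)] in auto)
qed

lemma pe_compl: "finite E \<Longrightarrow> prob_event E p A + prob_event E p (\<lambda>g. \<not> A g) = 1"
proof -
  assume f: "finite E"
  have "prob_event E p A + prob_event E p (\<lambda>g. \<not> A g) = (\<Sum>g\<in>Pow E. sample_prob E p g * (if A g then 1 else 0) + sample_prob E p g * (if \<not> A g then 1 else 0))"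
    using f by (simp add: pe_alt sum.distrib)
  also have "\<dots> = (\<Sum>g\<in>Pow E. sample_prob E p g)" by (rule sum.cong) auto
  finally show ?thesis using L1[OF f] by simp
qed

lemma indep: assumes "finite E" "A \<subseteq> E"
  shows "prob_event E p (\<lambda>g. g \<inter> A = {}) = (\<Prod>e\<in>A. 1 - p e)"
proof -
  have fA: "finite A" using assms finite_subset by blast
  have "prob_event E p (\<lambda>g. g \<inter> A = {}) = (\<Sum>g\<in>Pow (E - A). sample_prob E p g)"
    unfolding prob_event_def by (rule sum.cong) auto
  also have "\<dots> = (\<Sum>g\<in>Pow (E - A). sample_prob (E - A) p g * (\<Prod>e\<in>A. 1 - p e))"
  proof (rule sum.cong)
    fix g assume g: "g \<in> Pow (E - A)"
    have "E - g = (E - A - g) \<union> A" using g assms by auto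
    hence "(\<Prod>e\<in>E - g. 1 - p e) = (\<Prod>e\<in>(E - A - g) \<union> A. 1 - p e)" by simp
    also have "\<dots> = (\<Prod>e\<in>E - A - g. 1 - p e) * (\<Prod>e\<in>A. 1 - p e)"
      by (rule prod.union_disjoint) (use assms fA in auto)
    finally have "(\<Prod>e\<in>E - g. 1 - p e) = (\<Prod>e\<in>E - A - g. 1 - p e) * (\<Prod>e\<in>A. 1 - p e)" .
    thus "sample_prob E p g = sample_prob (E - A) p g * (\<Prod>e\<in>A. 1 - p e)"
      by (simp add: sample_prob_def)
  qed simp
  also have "\<dots> = (\<Prod>e\<in>A. 1 - p e)"
    using L1[of "E - A" p] assms by (simp add: sum_distrib_right[symmetric])
  finally show ?thesis .
qed

lemma has_prob: assumes "finite E"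
  shows "prob_event E p (\<lambda>g. has_in_edge g u) = gamma E p u"
proof -
  let ?A = "{e\<in>E. snd e = u}"
  have "prob_event E p (\<lambda>g. \<not> has_in_edge g u) = prob_event E p (\<lambda>g. g \<inter> ?A = {})"
    by (rule pe_cong) (auto simp: has_in_edge_def)
  also have "\<dots> = (\<Prod>e\<in>?A. 1 - p e)" by (rule indep) (use assms in auto)
  also have "?A = (\<lambda>v. (v, u)) ` in_nbrs E u" by (auto simp: in_nbrs_def)
  also have "(\<Prod>e\<in>(\<lambda>v. (v, u)) ` in_nbrs E u. 1 - p e) = (\<Prod>v\<in>in_nbrs E u. 1 - p (v, u))"
    by (subst prod.reindex) (auto simp: inj_on_def)
  finally show ?thesis using pe_compl[OF assms, of p "\<lambda>g. has_in_edge g u"]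
    by (simp add: gamma_def)
qed

lemma partition: assumes "finite E" "finite V" "\<And>g. g \<subseteq> E \<Longrightarrow> f g \<subseteq> V"
  shows "(\<Sum>R\<in>Pow V. prob_event E p (\<lambda>g. f g = R \<and> Q g)) = prob_event E p Q"
proof -
  have "(\<Sum>R\<in>Pow V. prob_event E p (\<lambda>g. f g = R \<and> Q g))
     = (\<Sum>R\<in>Pow V. \<Sum>g\<in>Pow E. sample_prob E p g * (if f g = R then (if Q g then 1 else 0) else 0))"
    unfolding pe_alt[OF assms(1)] by (rule sum.cong[OF refl], rule sum.cong[OF refl]) auto
  also have "\<dots> = (\<Sum>g\<in>Pow E. \<Sum>R\<in>Pow V. sample_prob E p g * (if f g = R then (if Q g then 1 else 0) else 0))"
    by (rule sum.swap)
  also have "\<dots> = (\<Sum>g\<in>Pow E. sample_prob E p g * (if Q g then 1 else 0))"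
  proof (rule sum.cong)
    fix g assume "g \<in> Pow E"
    hence "f g \<in> Pow V" using assms(3) by auto
    thus "(\<Sum>R\<in>Pow V. sample_prob E p g * (if f g = R then (if Q g then 1 else 0) else 0)) = sample_prob E p g * (if Q g then 1 else 0)"
    proof -
      have "(\<Sum>R\<in>Pow V. sample_prob E p g * (if f g = R then (if Q g then 1 else 0) else 0))
          = (\<Sum>R\<in>Pow V. if f g = R then sample_prob E p g * (if Q g then 1 else 0) else 0)"
        by (rule sum.cong) auto
      also have "\<dots> = sample_prob E p g * (if Q g then 1 else 0)"
        using sum.delta'[of "Pow V" "f g" "\<lambda>_. sample_prob E p g * (if Q g then 1 else 0)"] assms(2) \<open>f g \<in> Pow V\<close> by simp
      finally show ?thesis .
    qed
  qed simp
  also have "\<dots> = prob_event E p Q" by (rule pe_alt[OF assms(1), symmetric])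
  finally show ?thesis .
qed


lemma rt_V: "(s, v) \<in> g\<^sup>* \<Longrightarrow> g \<subseteq> V \<times> V \<Longrightarrow> s = v \<or> (s \<in> V \<and> v \<in> V)"
  by (induct rule: rtrancl_induct) auto

lemma Xv: "finite S \<Longrightarrow> X_var S R = (if S \<inter> R = {} then 0 else 1)"
  unfolding X_var_def by (auto simp: card_gt_0_iff Suc_le_eq min_def)

theorem lemma3:
  fixes V :: "'a set" and E :: "('a \<times> 'a) set" and p :: "'a \<times> 'a \<Rightarrow> real"
    and b :: "'a \<Rightarrow> real" and S :: "'a set"
  assumes "finite V" and "E \<subseteq> V \<times> V"
    and "\<And>e. e \<in> E \<Longrightarrow> 0 < p e \<and> p e < 1"
    and "\<And>u. u \<in> V \<Longrightarrow> b u \<ge> 0"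
    and "Gamma V b > 0" and "Phi V E p b > 0"
    and "S \<subseteq> V"
  shows "benefit E p b S = Phi V E p b * ibs_expect V E p b (X_var S)
           + (\<Sum>v\<in>S. (1 - gamma E p v) * b v)
       \<and> Phi V E p b * ibs_expect V E p b (X_var S) + (\<Sum>v\<in>S. (1 - gamma E p v) * b v)
           = Gamma V b * ibs_expect V E p b (Z_var V E p b S)"
proof -
  note fV = assms(1) and EV = assms(2) and pr = assms(3) and SV = assms(7)
  have fE: "finite E" using fV EV finite_subset by blast
  have fS: "finite S" using fV SV finite_subset by blast
  define P where "P = prob_event E p"
  define Ph where "Ph = Phi V E p b"
  define c where "c = (\<Sum>v\<in>S. (1 - gamma E p v) * b v)"
  have Ph0: "Ph \<noteq> 0" using assms(6) Ph_def by simp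
  have reachS: "reachable_set g S \<subseteq> V" if "g \<subseteq> E" for g
    using rt_V[of _ _ g V] that EV SV unfolding reachable_set_def by blast
  have reachV: "reaching_set g u \<subseteq> V" if "g \<subseteq> E" "u \<in> V" for g u
    using rt_V[of _ _ g V] that EV unfolding reaching_set_def by blast
  have hasP: "P (\<lambda>g. has_in_edge g u) = gamma E p u" for u
    unfolding P_def by (rule has_prob[OF fE])
  have stepA: "benefit E p b S = (\<Sum>u\<in>V. b u * P (\<lambda>g. u \<in> reachable_set g S))"
  proof -
    have "benefit E p b S = (\<Sum>g\<in>Pow E. \<Sum>u\<in>V. sample_prob E p g * (b u * (if u \<in> reachable_set g S then 1 else 0)))"
      unfolding benefit_def
    proof (rule sum.cong)
      fix g assume g: "g \<in> Pow E"
      have "(\<Sum>u\<in>reachable_set g S. b u) = (\<Sum>u\<in>V \<inter> reachable_set g S. b u)"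
        using reachS[of g] g by (simp add: Int_absorb1)
      also have "\<dots> = (\<Sum>u\<in>V. b u * (if u \<in> reachable_set g S then 1 else 0))"
        by (subst sum.inter_restrict[OF fV]) (rule sum.cong, auto)
      finally show "sample_prob E p g * (\<Sum>u\<in>reachable_set g S. b u) = (\<Sum>u\<in>V. sample_prob E p g * (b u * (if u \<in> reachable_set g S then 1 else 0)))"
        by (simp add: sum_distrib_left)
    qed simp
    also have "\<dots> = (\<Sum>u\<in>V. \<Sum>g\<in>Pow E. b u * (sample_prob E p g * (if u \<in> reachable_set g S then 1 else 0)))"
      by (subst sum.swap) (simp add: algebra_simps)
    also have "\<dots> = (\<Sum>u\<in>V. b u * P (\<lambda>g. u \<in> reachable_set g S))"
      unfolding P_def by (simp add: pe_alt[OF fE] sum_distrib_left)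
    finally show ?thesis .
  qed
  have stepB: "P (\<lambda>g. u \<in> reachable_set g S) = P (\<lambda>g. has_in_edge g u \<and> S \<inter> reaching_set g u \<noteq> {})
      + (if u \<in> S then 1 - gamma E p u else 0)" if u: "u \<in> V" for u
  proof (cases "u \<in> S")
    case True
    have "P (\<lambda>g. u \<in> reachable_set g S) = 1"
      unfolding P_def by (rule pe_true[OF fE]) (use True in \<open>auto simp: reachable_set_def\<close>)
    moreover have "P (\<lambda>g. has_in_edge g u \<and> S \<inter> reaching_set g u \<noteq> {}) = P (\<lambda>g. has_in_edge g u)"
      unfolding P_def by (rule pe_cong) (use True in \<open>auto simp: reaching_set_def\<close>)
    ultimately show ?thesis using True hasP by simp
  next
    case False
    have "P (\<lambda>g. u \<in> reachable_set g S) = P (\<lambda>g. has_in_edge g u \<and> S \<inter> reaching_set g u \<noteq> {})"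
      unfolding P_def
    proof (rule pe_cong)
      fix g :: "('a \<times> 'a) set"
      show "(u \<in> reachable_set g S) = (has_in_edge g u \<and> S \<inter> reaching_set g u \<noteq> {})"
      proof
        assume "u \<in> reachable_set g S"
        then obtain s where s: "s \<in> S" "(s, u) \<in> g\<^sup>*" unfolding reachable_set_def by blast
        with False have "s \<noteq> u" by blast
        with s(2) obtain y where "(y, u) \<in> g" by (metis rtranclE)
        thus "has_in_edge g u \<and> S \<inter> reaching_set g u \<noteq> {}"
          using s unfolding has_in_edge_def reaching_set_def by blast
      next
        assume "has_in_edge g u \<and> S \<inter> reaching_set g u \<noteq> {}"
        thus "u \<in> reachable_set g S" unfolding reaching_set_def reachable_set_def by blast
      qed
    qed
    thus ?thesis using False by simp
  qed
  have part: "(\<Sum>R\<in>Pow V. P (\<lambda>g. reaching_set g u = R \<and> Q g)) = P Q" if "u \<in> V" for u Q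
    unfolding P_def by (rule partition[OF fE fV]) (use reachV that in auto)
  have stepC: "gamma E p u * (\<Sum>R\<in>Pow V. cond_prob E p (\<lambda>g. reaching_set g u = R) (\<lambda>g. has_in_edge g u) * X_var S R)
      = P (\<lambda>g. has_in_edge g u \<and> S \<inter> reaching_set g u \<noteq> {})" if u: "u \<in> V" for u
  proof (cases "gamma E p u = 0")
    case True
    have "P (\<lambda>g. has_in_edge g u \<and> S \<inter> reaching_set g u \<noteq> {}) \<le> P (\<lambda>g. has_in_edge g u)"
      "0 \<le> P (\<lambda>g. has_in_edge g u \<and> S \<inter> reaching_set g u \<noteq> {})"
      unfolding P_def by (rule pe_mono[OF fE pr], auto)+
    then show ?thesis using True hasP[of u] by simp
  next
    case False
    have "gamma E p u * (\<Sum>R\<in>Pow V. cond_prob E p (\<lambda>g. reaching_set g u = R) (\<lambda>g. has_in_edge g u) * X_var S R)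
        = (\<Sum>R\<in>Pow V. P (\<lambda>g. reaching_set g u = R \<and> has_in_edge g u) * X_var S R)"
      unfolding sum_distrib_left cond_prob_def P_def[symmetric] hasP
      by (rule sum.cong) (use False in auto)
    also have "\<dots> = (\<Sum>R\<in>Pow V. P (\<lambda>g. reaching_set g u = R \<and> (has_in_edge g u \<and> S \<inter> reaching_set g u \<noteq> {})))"
    proof (rule sum.cong)
      fix R assume "R \<in> Pow V"
      show "P (\<lambda>g. reaching_set g u = R \<and> has_in_edge g u) * X_var S R = P (\<lambda>g. reaching_set g u = R \<and> (has_in_edge g u \<and> S \<inter> reaching_set g u \<noteq> {}))"
      proof (cases "S \<inter> R = {}")
        case True
        have "P (\<lambda>g. reaching_set g u = R \<and> (has_in_edge g u \<and> S \<inter> reaching_set g u \<noteq> {})) = 0"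
          unfolding P_def by (rule pe_false) (use True in auto)
        thus ?thesis using True Xv[OF fS] by simp
      next
        case False
        have "P (\<lambda>g. reaching_set g u = R \<and> (has_in_edge g u \<and> S \<inter> reaching_set g u \<noteq> {})) = P (\<lambda>g. reaching_set g u = R \<and> has_in_edge g u)"
          unfolding P_def by (rule pe_cong) (use False in auto)
        thus ?thesis using False Xv[OF fS] by simp
      qed
    qed simp
    also have "\<dots> = P (\<lambda>g. has_in_edge g u \<and> S \<inter> reaching_set g u \<noteq> {})"
      by (rule part[OF u])
    finally show ?thesis .
  qed
  have stepD: "gamma E p u * (\<Sum>R\<in>Pow V. cond_prob E p (\<lambda>g. reaching_set g u = R) (\<lambda>g. has_in_edge g u)) = gamma E p u"
    if u: "u \<in> V" for u
  proof (cases "gamma E p u = 0")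
    case False
    have "gamma E p u * (\<Sum>R\<in>Pow V. cond_prob E p (\<lambda>g. reaching_set g u = R) (\<lambda>g. has_in_edge g u))
        = (\<Sum>R\<in>Pow V. P (\<lambda>g. reaching_set g u = R \<and> has_in_edge g u))"
      unfolding sum_distrib_left cond_prob_def P_def[symmetric] hasP
      by (rule sum.cong) (use False in auto)
    also have "\<dots> = gamma E p u" using part[OF u] hasP by simp
    finally show ?thesis .
  qed simp
  have EX: "Ph * ibs_expect V E p b (X_var S) = (\<Sum>u\<in>V. b u * P (\<lambda>g. has_in_edge g u \<and> S \<inter> reaching_set g u \<noteq> {}))"
  proof -
    have "ibs_expect V E p b (X_var S) = (\<Sum>R\<in>Pow V. \<Sum>u\<in>V. b u / Ph * (gamma E p u * (cond_prob E p (\<lambda>g. reaching_set g u = R) (\<lambda>g. has_in_edge g u) * X_var S R)))"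
      unfolding ibs_expect_def ibs_prob_def Ph_def[symmetric] sum_distrib_right
      by (rule sum.cong, simp, rule sum.cong, simp_all)
    also have "\<dots> = (\<Sum>u\<in>V. b u / Ph * (gamma E p u * (\<Sum>R\<in>Pow V. cond_prob E p (\<lambda>g. reaching_set g u = R) (\<lambda>g. has_in_edge g u) * X_var S R)))"
      by (subst sum.swap) (simp add: sum_distrib_left)
    also have "\<dots> = (\<Sum>u\<in>V. b u / Ph * P (\<lambda>g. has_in_edge g u \<and> S \<inter> reaching_set g u \<noteq> {}))"
      using stepC by simp
    finally show ?thesis using Ph0 by (simp add: sum_distrib_left)
  qed
  have sum1: "(\<Sum>R\<in>Pow V. ibs_prob V E p b R) = 1"
  proof -
    have "(\<Sum>R\<in>Pow V. ibs_prob V E p b R) = (\<Sum>R\<in>Pow V. \<Sum>u\<in>V. b u / Ph * (gamma E p u * cond_prob E p (\<lambda>g. reaching_set g u = R) (\<lambda>g. has_in_edge g u)))"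
      unfolding ibs_prob_def Ph_def[symmetric]
      by (rule sum.cong, simp, rule sum.cong, simp_all)
    also have "\<dots> = (\<Sum>u\<in>V. b u / Ph * (gamma E p u * (\<Sum>R\<in>Pow V. cond_prob E p (\<lambda>g. reaching_set g u = R) (\<lambda>g. has_in_edge g u))))"
      by (subst sum.swap) (simp add: sum_distrib_left)
    also have "\<dots> = (\<Sum>u\<in>V. gamma E p u * b u / Ph)"
      by (rule sum.cong) (simp_all add: stepD)
    also have "\<dots> = (\<Sum>u\<in>V. gamma E p u * b u) / Ph"
      by (simp add: sum_divide_distrib)
    finally show ?thesis using Ph0 Ph_def Phi_def by simp
  qed
  have part1: "benefit E p b S = Ph * ibs_expect V E p b (X_var S) + c"
  proof -
    have "benefit E p b S = (\<Sum>u\<in>V. b u * P (\<lambda>g. has_in_edge g u \<and> S \<inter> reaching_set g u \<noteq> {})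
        + (if u \<in> S then (1 - gamma E p u) * b u else 0))"
      unfolding stepA by (rule sum.cong) (simp_all add: stepB algebra_simps)
    also have "\<dots> = Ph * ibs_expect V E p b (X_var S) + (\<Sum>u\<in>V. if u \<in> S then (1 - gamma E p u) * b u else 0)"
      by (simp add: sum.distrib EX)
    also have "(\<Sum>u\<in>V. if u \<in> S then (1 - gamma E p u) * b u else 0) = c"
      unfolding c_def using sum.inter_restrict[OF fV, of "\<lambda>u. (1 - gamma E p u) * b u" S] SV
      by (simp add: Int_absorb1)
    finally show ?thesis .
  qed
  have part2: "Ph * ibs_expect V E p b (X_var S) + c = Gamma V b * ibs_expect V E p b (Z_var V E p b S)"
  proof -
    have G0: "Gamma V b \<noteq> 0" using assms(5) by simp
    have "ibs_expect V E p b (Z_var V E p b S) = (\<Sum>R\<in>Pow V. Ph / Gamma V b * (ibs_prob V E p b R * X_var S R) + c / Gamma V b * ibs_prob V E p b R)"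
      unfolding ibs_expect_def Z_var_def Ph_def[symmetric] c_def
      by (rule sum.cong) (simp_all add: algebra_simps sum_divide_distrib)
    also have "\<dots> = Ph / Gamma V b * ibs_expect V E p b (X_var S) + c / Gamma V b"
      using sum1 by (simp add: sum.distrib sum_distrib_left[symmetric] ibs_expect_def sum_divide_distrib[symmetric] mult.assoc)
    finally show ?thesis using G0 by (simp add: field_simps)
  qed
  show ?thesis using part1 part2 unfolding Ph_def c_def by simp
qed

end
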